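(* Let $S=(\Lambda,L)$ on $X$ and $S'=(\Lambda',L')$ on $X'$ be bispectrally dual completely integrable quantum systems, with anti-isomorphism $b:B\to B'$. Let $f\in\mathcal{O}(\Lambda)$ and $g\in\mathcal{O}(\Lambda')$ (the latter viewed, via $\pi'$, as a multiplication operator in $\mathcal{D}(X)$), and let $m=\operatorname{ord}L_f$ and $n=\operatorname{ord}L'_g$. Then there exist elements $K,Q,R\in B$ satisfying $$g^{m+1}\circ L_f=K\circ g,\qquad L_f\circ g^{m+1}=g\circ R,\qquad L_f^{n+1}\circ g=Q\circ L_f.$$
   Context: All varieties are over an algebraically closed field $\mathbb{F}$ of characteristic zero; $\mathcal{D}(X)$ denotes the ring of differential operators on $X$ and $\mathcal{O}(X)$ its coordinate ring. A quantum Hamiltonian system (QHS) on a smooth irreducible affine variety $X$ is a pair $S=(\Lambda,L)$ where $\Lambda$ is an affine variety over $\mathbb{F}$ and $L:\mathcal{O}(\Lambda)\to\mathcal{D}(X)$, $h\mapsto L_h$, is an embedding of rings; it is a completely integrable quantum system if $\dim\Lambda=\dim X$. For QHSs $S=(\Lambda,L)$ on $X$ and $S'=(\Lambda',L')$ on $X'$, suppose $X'$ covers $\Lambda$ and $X$ covers $\Lambda'$, giving natural embeddings $\pi:\mathcal{O}(\Lambda)\to\mathcal{O}(X')$ and $\pi':\mathcal{O}(\Lambda')\to\mathcal{O}(X)$; functions act as multiplication operators, so $\mathcal{O}(X)\subset\mathcal{D}(X)$, and one writes $g$ for $\pi'(g)$ and $f$ for $\pi(f)$. Let $B\subset\mathcal{D}(X)$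 be the subring generated by the images of $L$ and $\pi'$, and $B'\subset\mathcal{D}(X')$ the subring generated by the images of $L'$ and $\pi$. $S$ and $S'$ are bispectrally dual if there is a map $b:B\to B'$ with $b(L_h)=\pi(h)$ for all $h\in\mathcal{O}(\Lambda)$, $b(\pi'(k))=L'_k$ for all $k\in\mathcal{O}(\Lambda')$, $b(P_1P_2)=b(P_2)b(P_1)$ and $b(P_1+P_2)=b(P_1)+b(P_2)$ for all $P_1,P_2\in B$, and $b(P)=0$ iff $P=0$. *)

theory Defs
  imports Main "HOL-Library.Extended_Nat" "HOL-Computational_Algebra.Polynomial"
begin

definition alg_closed :: "'f::field itself \<Rightarrow> bool" where
  "alg_closed _ \<longleftrightarrow> (\<forall>p::'f poly. degree p \<noteq> 0 \<longrightarrow> (\<exists>z. poly p z = 0))"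

section \<open>Commutative F-algebras (coordinate rings), given by the structure map F -> A\<close>

definition falg :: "('f::field \<Rightarrow> 'a::comm_ring_1) \<Rightarrow> bool" where
  "falg \<iota> \<longleftrightarrow> (\<forall>c d. \<iota> (c + d) = \<iota> c + \<iota> d \<and> \<iota> (c * d) = \<iota> c * \<iota> d) \<and> \<iota> 1 = 1"

inductive_set subalg :: "('f::field \<Rightarrow> 'a::comm_ring_1) \<Rightarrow> 'a set \<Rightarrow> 'a set"
  for \<iota> G where
  gen: "g \<in> G \<Longrightarrow> g \<in> subalg \<iota> G"
| scal: "\<iota> c \<in> subalg \<iota> G"
| add: "a \<in> subalg \<iota> G \<Longrightarrow> b \<in> subalg \<iota> G \<Longrightarrow> a + b \<in> subalg \<iota> G"
| mult: "a \<in> subalg \<iota> G \<Longrightarrow> b \<in> subalg \<iota> G \<Longrightarrow> a * b \<in> subalg \<iota> G"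

definition fin_gen :: "('f::field \<Rightarrow> 'a::comm_ring_1) \<Rightarrow> bool" where
  "fin_gen \<iota> \<longleftrightarrow> (\<exists>G. finite G \<and> subalg \<iota> G = UNIV)"

definition reduced :: "'a::comm_ring_1 itself \<Rightarrow> bool" where
  "reduced _ \<longleftrightarrow> (\<forall>(a::'a) n. a ^ n = 0 \<longrightarrow> a = 0)"

text \<open>Coordinate ring of an affine variety over F: a finitely generated reduced
  commutative F-algebra (nonzero, since comm_ring_1 has 0 ~= 1).\<close>
definition affine_coord_ring :: "('f::field \<Rightarrow> 'a::comm_ring_1) \<Rightarrow> bool" where
  "affine_coord_ring \<iota> \<longleftrightarrow> falg \<iota> \<and> fin_gen \<iota> \<and> reduced TYPE('a)"

definition alg_hom :: "('f::field \<Rightarrow> 'a::comm_ring_1) \<Rightarrow> ('f \<Rightarrow> 'b::comm_ring_1) \<Rightarrow> ('a \<Rightarrow> 'b) \<Rightarrow> bool" where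
  "alg_hom \<iota>A \<iota>B \<phi> \<longleftrightarrow> (\<forall>a b. \<phi> (a + b) = \<phi> a + \<phi> b \<and> \<phi> (a * b) = \<phi> a * \<phi> b)
      \<and> \<phi> 1 = 1 \<and> (\<forall>c. \<phi> (\<iota>A c) = \<iota>B c)"

definition is_ideal :: "'a::comm_ring_1 set \<Rightarrow> bool" where
  "is_ideal I \<longleftrightarrow> 0 \<in> I \<and> (\<forall>a\<in>I. \<forall>b\<in>I. a + b \<in> I) \<and> (\<forall>a\<in>I. \<forall>r. r * a \<in> I)"

definition is_prime_ideal :: "'a::comm_ring_1 set \<Rightarrow> bool" where
  "is_prime_ideal I \<longleftrightarrow> is_ideal I \<and> I \<noteq> UNIV \<and> (\<forall>a b. a * b \<in> I \<longrightarrow> a \<in> I \<or> b \<in> I)"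

definition is_maximal_ideal :: "'a::comm_ring_1 set \<Rightarrow> bool" where
  "is_maximal_ideal M \<longleftrightarrow> is_ideal M \<and> M \<noteq> UNIV \<and>
     (\<forall>J. is_ideal J \<and> M \<subseteq> J \<longrightarrow> J = M \<or> J = UNIV)"

definition krull_dim :: "'a::comm_ring_1 itself \<Rightarrow> enat" where
  "krull_dim _ = Sup {enat n | n. \<exists>c :: nat \<Rightarrow> 'a set.
       (\<forall>i\<le>n. is_prime_ideal (c i)) \<and> (\<forall>i<n. c i \<subset> c (Suc i))}"

definition ideal_sq :: "'a::comm_ring_1 set \<Rightarrow> 'a set" where
  "ideal_sq M = {\<Sum>i<(k::nat). a i * b i | k a b. \<forall>i<k. a i \<in> M \<and> b i \<in> M}"

text \<open>dim over F of the cotangent space M/M^2.\<close>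
definition cotangent_dim :: "('f::field \<Rightarrow> 'a::comm_ring_1) \<Rightarrow> 'a set \<Rightarrow> enat" where
  "cotangent_dim \<iota> M = Inf {enat d | d. \<exists>x :: nat \<Rightarrow> 'a. (\<forall>i<d. x i \<in> M) \<and>
       (\<forall>y\<in>M. \<exists>c :: nat \<Rightarrow> 'f. y - (\<Sum>i<d. \<iota> (c i) * x i) \<in> ideal_sq M)}"

text \<open>Coordinate ring of a smooth irreducible affine variety (over an algebraically closed
  field): an affine coordinate ring which is a domain (type class idom) and is regular at every
  maximal ideal, i.e. dim_F (M/M^2) equals the dimension.\<close>
definition smooth_irred_coord_ring :: "('f::field \<Rightarrow> 'a::idom) \<Rightarrow> bool" where
  "smooth_irred_coord_ring \<iota> \<longleftrightarrow> affine_coord_ring \<iota> \<and>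
     (\<forall>M. is_maximal_ideal M \<longrightarrow> cotangent_dim \<iota> M = krull_dim TYPE('a))"

section \<open>Differential operators (Grothendieck's definition)\<close>

definition mul_op :: "'a::comm_ring_1 \<Rightarrow> 'a \<Rightarrow> 'a" where
  "mul_op a = (\<lambda>x. a * x)"

definition F_linear :: "('f::field \<Rightarrow> 'a::comm_ring_1) \<Rightarrow> ('a \<Rightarrow> 'a) \<Rightarrow> bool" where
  "F_linear \<iota> P \<longleftrightarrow> (\<forall>x y. P (x + y) = P x + P y) \<and> (\<forall>c x. P (\<iota> c * x) = \<iota> c * P x)"

fun diffop_le :: "('f::field \<Rightarrow> 'a::comm_ring_1) \<Rightarrow> nat \<Rightarrow> ('a \<Rightarrow> 'a) \<Rightarrow> bool" where
  "diffop_le \<iota> 0 P = (\<exists>a. P = mul_op a)"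
| "diffop_le \<iota> (Suc k) P = (F_linear \<iota> P \<and> (\<forall>a. diffop_le \<iota> k (\<lambda>x. P (a * x) - a * P x)))"

text \<open>The ring D(X) of differential operators (ring structure: pointwise +, composition).\<close>
definition diffops :: "('f::field \<Rightarrow> 'a::comm_ring_1) \<Rightarrow> ('a \<Rightarrow> 'a) set" where
  "diffops \<iota> = {P. \<exists>k. diffop_le \<iota> k P}"

definition ord :: "('f::field \<Rightarrow> 'a::comm_ring_1) \<Rightarrow> ('a \<Rightarrow> 'a) \<Rightarrow> nat" where
  "ord \<iota> P = (LEAST k. diffop_le \<iota> k P)"

inductive_set gen_subring :: "('a \<Rightarrow> 'a::comm_ring_1) set \<Rightarrow> ('a \<Rightarrow> 'a) set" for S where
  gen: "P \<in> S \<Longrightarrow> P \<in> gen_subring S"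
| one: "id \<in> gen_subring S"
| zero: "(\<lambda>_. 0) \<in> gen_subring S"
| add: "P \<in> gen_subring S \<Longrightarrow> Q \<in> gen_subring S \<Longrightarrow> (\<lambda>x. P x + Q x) \<in> gen_subring S"
| neg: "P \<in> gen_subring S \<Longrightarrow> (\<lambda>x. - P x) \<in> gen_subring S"
| comp: "P \<in> gen_subring S \<Longrightarrow> Q \<in> gen_subring S \<Longrightarrow> P \<circ> Q \<in> gen_subring S"

definition QHS :: "('f::field \<Rightarrow> 'l::comm_ring_1) \<Rightarrow> ('f \<Rightarrow> 'x::idom) \<Rightarrow> ('l \<Rightarrow> 'x \<Rightarrow> 'x) \<Rightarrow> bool" where
  "QHS \<iota>\<Lambda> \<iota>X L \<longleftrightarrow> smooth_irred_coord_ring \<iota>X \<and> affine_coord_ring \<iota>\<Lambda> \<and>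
     (\<forall>h. L h \<in> diffops \<iota>X) \<and> inj L \<and>
     (\<forall>h1 h2. L (h1 + h2) = (\<lambda>x. L h1 x + L h2 x) \<and> L (h1 * h2) = L h1 \<circ> L h2) \<and> L 1 = id"

definition completely_integrable ::
  "('f::field \<Rightarrow> 'l::comm_ring_1) \<Rightarrow> ('f \<Rightarrow> 'x::idom) \<Rightarrow> ('l \<Rightarrow> 'x \<Rightarrow> 'x) \<Rightarrow> bool" where
  "completely_integrable \<iota>\<Lambda> \<iota>X L \<longleftrightarrow> QHS \<iota>\<Lambda> \<iota>X L \<and> krull_dim TYPE('l) = krull_dim TYPE('x)"

definition bispectral_dual_via ::
  "('l::comm_ring_1 \<Rightarrow> 'x::idom \<Rightarrow> 'x) \<Rightarrow> ('l' :: comm_ring_1 \<Rightarrow> 'x) \<Rightarrow>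
   ('l' \<Rightarrow> 'x'::idom \<Rightarrow> 'x') \<Rightarrow> ('l \<Rightarrow> 'x') \<Rightarrow> (('x \<Rightarrow> 'x) \<Rightarrow> ('x' \<Rightarrow> 'x')) \<Rightarrow> bool" where
  "bispectral_dual_via L \<pi>' L' \<pi> b \<longleftrightarrow>
     (let B = gen_subring (range L \<union> range (\<lambda>k. mul_op (\<pi>' k))) in
       (\<forall>h. b (L h) = mul_op (\<pi> h)) \<and>
       (\<forall>k. b (mul_op (\<pi>' k)) = L' k) \<and>
       (\<forall>P1\<in>B. \<forall>P2\<in>B. b (P1 \<circ> P2) = b P2 \<circ> b P1) \<and>
       (\<forall>P1\<in>B. \<forall>P2\<in>B. b (\<lambda>x. P1 x + P2 x) = (\<lambda>y. b P1 y + b P2 y)) \<and>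
       (\<forall>P\<in>B. b P = (\<lambda>_. 0) \<longleftrightarrow> P = (\<lambda>_. 0)))"

end

theory Submission
  imports Defs
begin


lemma mul_op_pow: "mul_op (c::'a::comm_ring_1) ^^ j = mul_op (c ^ j)"
  by (induction j) (auto simp: mul_op_def fun_eq_iff)

lemma pow_in:
  assumes "\<forall>A\<in>S. \<forall>B\<in>S. A \<circ> B \<in> S" "M \<in> S"
  shows "M ^^ Suc j \<in> S"
proof (induction j)
  case 0 then show ?case using assms by simp
next
  case (Suc j)
  have "M ^^ Suc (Suc j) = M \<circ> M ^^ Suc j" by simp
  then show ?case using assms Suc by metis
qed

lemma key:
  fixes P :: "'a::comm_ring_1 \<Rightarrow> 'a"
  assumes cadd: "\<forall>A\<in>S. \<forall>B\<in>S. (\<lambda>x. A x + B x) \<in> S"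
    and cneg: "\<forall>A\<in>S. (\<lambda>x. - A x) \<in> S"
    and ccomp: "\<forall>A\<in>S. \<forall>B\<in>S. A \<circ> B \<in> S"
    and cS: "mul_op c \<in> S"
  shows "diffop_le \<iota> k P \<Longrightarrow> P \<in> S \<Longrightarrow>
    (\<exists>K\<in>S. (mul_op c ^^ (k+1)) \<circ> P = K \<circ> mul_op c) \<and>
    (\<exists>R\<in>S. P \<circ> (mul_op c ^^ (k+1)) = mul_op c \<circ> R)"
proof (induction k arbitrary: P)
  case 0
  then obtain a where a: "P = mul_op a" by auto
  have "mul_op c \<circ> P = P \<circ> mul_op c" "P \<circ> mul_op c = mul_op c \<circ> P"
    using a by (auto simp: mul_op_def fun_eq_iff algebra_simps)
  then have "(mul_op c ^^ (0+1)) \<circ> P = P \<circ> mul_op c" "P \<circ> (mul_op c ^^ (0+1)) = mul_op c \<circ> P" by simp_all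
  then show ?case using 0 by blast
next
  case (Suc k)
  define Q where "Q = (\<lambda>x. P (c * x) - c * P x)"
  have dQ: "diffop_le \<iota> k Q" using Suc.prems(1) unfolding Q_def by simp
  have "Q = (\<lambda>x. (P \<circ> mul_op c) x + (\<lambda>x. - (mul_op c \<circ> P) x) x)"
    unfolding Q_def by (auto simp: mul_op_def fun_eq_iff)
  moreover have "(\<lambda>x. (P \<circ> mul_op c) x + (\<lambda>x. - (mul_op c \<circ> P) x) x) \<in> S"
  proof -
    have m1: "P \<circ> mul_op c \<in> S" using ccomp cS Suc.prems(2) by blast
    have m2: "mul_op c \<circ> P \<in> S" using ccomp cS Suc.prems(2) by blast
    have m3: "(\<lambda>x. - (mul_op c \<circ> P) x) \<in> S" using cneg m2 by blast
    show ?thesis by (rule cadd[rule_format, OF m1 m3])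
  qed
  ultimately have QS: "Q \<in> S" by simp
  from Suc.IH[OF dQ QS] obtain K' R' where K'S: "K' \<in> S" and K': "(mul_op c ^^ (k+1)) \<circ> Q = K' \<circ> mul_op c"
    and R'S: "R' \<in> S" and R': "Q \<circ> (mul_op c ^^ (k+1)) = mul_op c \<circ> R'" by blast
  have cpS: "mul_op c ^^ (k+1) \<in> S" using pow_in[OF ccomp cS] by simp
  define K where "K = (\<lambda>x. ((mul_op c ^^ (k+1)) \<circ> P) x + (\<lambda>x. - K' x) x)"
  have KS: "K \<in> S" unfolding K_def
  proof -
    have m1: "(mul_op c ^^ (k+1)) \<circ> P \<in> S" using ccomp cpS Suc.prems(2) by blast
    have m3: "(\<lambda>x. - K' x) \<in> S" using cneg K'S by blast
    show "(\<lambda>x. ((mul_op c ^^ (k+1)) \<circ> P) x + (\<lambda>x. - K' x) x) \<in> S" by (rule cadd[rule_format, OF m1 m3])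
  qed
  have K'y: "K' (c * y) = c ^ (k+1) * Q y" for y
    using fun_cong[OF K', of y] by (unfold  mul_op_pow o_def) (simp add: mul_op_def)
  have "(mul_op c ^^ (Suc k+1)) \<circ> P = K \<circ> mul_op c"
  proof
    fix y
    have "((mul_op c ^^ (Suc k+1)) \<circ> P) y = c ^ (k+1) * (c * P y)"
      by (unfold  mul_op_pow o_def) (simp add: mul_op_def algebra_simps)
    also have "... = c ^ (k+1) * P (c * y) - c ^ (k+1) * Q y"
      by (simp add: Q_def algebra_simps)
    also have "... = (K \<circ> mul_op c) y"
      by (unfold K_def mul_op_pow o_def) (simp add: K'y mul_op_def)
    finally show "((mul_op c ^^ (Suc k+1)) \<circ> P) y = (K \<circ> mul_op c) y" .
  qed
  moreover
  define R where "R = (\<lambda>x. R' x + (P \<circ> (mul_op c ^^ (k+1))) x)"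
  have RS: "R \<in> S" unfolding R_def
  proof -
    have m1: "P \<circ> (mul_op c ^^ (k+1)) \<in> S" using ccomp cpS Suc.prems(2) by blast
    show "(\<lambda>x. R' x + (P \<circ> (mul_op c ^^ (k+1))) x) \<in> S" by (rule cadd[rule_format, OF R'S m1])
  qed
  have R'y: "Q (c ^ (k+1) * y) = c * R' y" for y
    using fun_cong[OF R', of y] by (unfold  mul_op_pow o_def) (simp add: mul_op_def)
  have "P \<circ> (mul_op c ^^ (Suc k+1)) = mul_op c \<circ> R"
  proof
    fix y
    have "(P \<circ> (mul_op c ^^ (Suc k+1))) y = P (c * (c ^ (k+1) * y))"
      by (unfold  mul_op_pow o_def) (simp add: mul_op_def algebra_simps)
    also have "... = Q (c ^ (k+1) * y) + c * P (c ^ (k+1) * y)"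
      by (simp add: Q_def)
    also have "... = (mul_op c \<circ> R) y"
      by (unfold R_def mul_op_pow o_def) (simp only: R'y mul_op_def, simp add: algebra_simps)
    finally show "(P \<circ> (mul_op c ^^ (Suc k+1))) y = (mul_op c \<circ> R) y" .
  qed
  ultimately show ?case using KS RS by blast
qed

theorem mainTheorem2:
  fixes \<iota>X :: "'f::field_char_0 \<Rightarrow> 'x::idom"
    and \<iota>X' :: "'f \<Rightarrow> 'x2::idom"
    and \<iota>\<Lambda> :: "'f \<Rightarrow> 'l::comm_ring_1"
    and \<iota>\<Lambda>' :: "'f \<Rightarrow> 'l2::comm_ring_1"
    and L :: "'l \<Rightarrow> 'x \<Rightarrow> 'x"
    and L' :: "'l2 \<Rightarrow> 'x2 \<Rightarrow> 'x2"
    and \<pi> :: "'l \<Rightarrow> 'x2"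
    and \<pi>' :: "'l2 \<Rightarrow> 'x"
    and b :: "('x \<Rightarrow> 'x) \<Rightarrow> ('x2 \<Rightarrow> 'x2)"
    and f :: 'l and g :: 'l2
  assumes "alg_closed TYPE('f)"
    and "completely_integrable \<iota>\<Lambda> \<iota>X L"
    and "completely_integrable \<iota>\<Lambda>' \<iota>X' L'"
    and "alg_hom \<iota>\<Lambda> \<iota>X' \<pi>" and "inj \<pi>"
    and "alg_hom \<iota>\<Lambda>' \<iota>X \<pi>'" and "inj \<pi>'"
    and "bispectral_dual_via L \<pi>' L' \<pi> b"
  shows "\<exists>K\<in>gen_subring (range L \<union> range (\<lambda>k. mul_op (\<pi>' k))).
         \<exists>Q\<in>gen_subring (range L \<union> range (\<lambda>k. mul_op (\<pi>' k))).
         \<exists>R\<in>gen_subring (range L \<union> range (\<lambda>k. mul_op (\<pi>' k))).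
           (mul_op (\<pi>' g) ^^ (ord \<iota>X (L f) + 1)) \<circ> L f = K \<circ> mul_op (\<pi>' g) \<and>
           L f \<circ> (mul_op (\<pi>' g) ^^ (ord \<iota>X (L f) + 1)) = mul_op (\<pi>' g) \<circ> R \<and>
           (L f ^^ (ord \<iota>X' (L' g) + 1)) \<circ> mul_op (\<pi>' g) = Q \<circ> L f"
proof -
  define B where "B = gen_subring (range L \<union> range (\<lambda>k. mul_op (\<pi>' k)))"
  have hL: "\<forall>h. b (L h) = mul_op (\<pi> h)"
    and hpi: "\<forall>k. b (mul_op (\<pi>' k)) = L' k"
    and hcomp: "\<forall>P1\<in>B. \<forall>P2\<in>B. b (P1 \<circ> P2) = b P2 \<circ> b P1"
    and hadd: "\<forall>P1\<in>B. \<forall>P2\<in>B. b (\<lambda>x. P1 x + P2 x) = (\<lambda>y. b P1 y + b P2 y)"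
    and hzero: "\<forall>P\<in>B. b P = (\<lambda>_. 0) \<longleftrightarrow> P = (\<lambda>_. 0)"
    using assms(8) unfolding bispectral_dual_via_def Let_def B_def by auto
  have Badd: "\<forall>A\<in>B. \<forall>C\<in>B. (\<lambda>x. A x + C x) \<in> B" unfolding B_def by (auto intro: gen_subring.add)
  have Bneg: "\<forall>A\<in>B. (\<lambda>x. - A x) \<in> B" unfolding B_def by (auto intro: gen_subring.neg)
  have Bcomp: "\<forall>A\<in>B. \<forall>C\<in>B. A \<circ> C \<in> B" unfolding B_def by (auto intro: gen_subring.comp)
  have Bz: "(\<lambda>_. 0) \<in> B" unfolding B_def by (rule gen_subring.zero)
  have Lf: "L f \<in> B" unfolding B_def by (auto intro: gen_subring.gen)
  have gB: "mul_op (\<pi>' g) \<in> B" unfolding B_def by (auto intro: gen_subring.gen)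
  have qhs: "QHS \<iota>\<Lambda> \<iota>X L" "QHS \<iota>\<Lambda>' \<iota>X' L'"
    using assms(2,3) unfolding completely_integrable_def by auto
  have "L f \<in> diffops \<iota>X" using qhs(1) unfolding QHS_def by auto
  then have d1: "diffop_le \<iota>X (ord \<iota>X (L f)) (L f)"
    unfolding diffops_def ord_def by (auto intro: LeastI_ex)
  have "L' g \<in> diffops \<iota>X'" using qhs(2) unfolding QHS_def by auto
  then have d2: "diffop_le \<iota>X' (ord \<iota>X' (L' g)) (L' g)"
    unfolding diffops_def ord_def by (auto intro: LeastI_ex)
  from key[OF Badd Bneg Bcomp gB d1 Lf] obtain K R where KR:
    "K \<in> B" "R \<in> B"
    "(mul_op (\<pi>' g) ^^ (ord \<iota>X (L f) + 1)) \<circ> L f = K \<circ> mul_op (\<pi>' g)"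
    "L f \<circ> (mul_op (\<pi>' g) ^^ (ord \<iota>X (L f) + 1)) = mul_op (\<pi>' g) \<circ> R"
    by blast
  have b0: "b (\<lambda>_. 0) = (\<lambda>_. 0)" using hzero Bz by auto
  have bneg: "b (\<lambda>x. - P x) = (\<lambda>y. - b P y)" if "P \<in> B" for P
  proof -
    have e: "b (\<lambda>x. P x + - P x) = (\<lambda>y. b P y + b (\<lambda>x. - P x) y)"
      using hadd[rule_format, OF that Bneg[rule_format, OF that]] by simp
    have "(\<lambda>x. P x + - P x) = (\<lambda>_. 0)" by simp
    then have "(\<lambda>y. b P y + b (\<lambda>x. - P x) y) = (\<lambda>_. 0)" using e b0 by simp
    then have "\<And>y. b P y + b (\<lambda>x. - P x) y = 0" by (simp add: fun_eq_iff)
    then show ?thesis by (simp add: fun_eq_iff add_eq_0_iff)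
  qed
  define S where "S = b ` B"
  have Sadd: "\<forall>A\<in>S. \<forall>C\<in>S. (\<lambda>x. A x + C x) \<in> S"
  proof (intro ballI)
    fix A C assume "A \<in> S" "C \<in> S"
    then obtain A0 C0 where h: "A0 \<in> B" "C0 \<in> B" "A = b A0" "C = b C0" unfolding S_def by auto
    have 1: "(\<lambda>x. A x + C x) = b (\<lambda>x. A0 x + C0 x)" using hadd h by simp
    have 2: "(\<lambda>x. A0 x + C0 x) \<in> B" using Badd h by blast
    show "(\<lambda>x. A x + C x) \<in> S" unfolding S_def by (rule image_eqI[of _ b, OF 1 2])
  qed
  have Sneg: "\<forall>A\<in>S. (\<lambda>x. - A x) \<in> S"
  proof (intro ballI)
    fix A assume "A \<in> S"
    then obtain A0 where h: "A0 \<in> B" "A = b A0" unfolding S_def by auto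
    have 1: "(\<lambda>x. - A x) = b (\<lambda>x. - A0 x)" using bneg h by simp
    have 2: "(\<lambda>x. - A0 x) \<in> B" using Bneg h by blast
    show "(\<lambda>x. - A x) \<in> S" unfolding S_def by (rule image_eqI[of _ b, OF 1 2])
  qed
  have Scomp: "\<forall>A\<in>S. \<forall>C\<in>S. A \<circ> C \<in> S"
  proof (intro ballI)
    fix A C assume "A \<in> S" "C \<in> S"
    then obtain A0 C0 where h: "A0 \<in> B" "C0 \<in> B" "A = b A0" "C = b C0" unfolding S_def by auto
    have 1: "A \<circ> C = b (C0 \<circ> A0)" using hcomp h by simp
    have 2: "C0 \<circ> A0 \<in> B" using Bcomp h by blast
    show "A \<circ> C \<in> S" unfolding S_def by (rule image_eqI[of _ b, OF 1 2])
  qed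
  have cS: "mul_op (\<pi> f) \<in> S" unfolding S_def using hL Lf by (intro image_eqI[of _ b "L f"]) auto
  have PS: "L' g \<in> S" unfolding S_def using hpi gB by (intro image_eqI[of _ b "mul_op (\<pi>' g)"]) auto
  from key[OF Sadd Sneg Scomp cS d2 PS] obtain R1 where R1S: "R1 \<in> S"
    and R1: "L' g \<circ> (mul_op (\<pi> f) ^^ (ord \<iota>X' (L' g) + 1)) = mul_op (\<pi> f) \<circ> R1" by blast
  from R1S obtain R0 where R0: "R0 \<in> B" "R1 = b R0" unfolding S_def by auto
  have powB: "L f ^^ Suc j \<in> B" for j using pow_in[OF Bcomp Lf] .
  have bpow: "b (L f ^^ Suc j) = mul_op (\<pi> f) ^^ Suc j" for j
  proof (induction j)
    case 0 then show ?case using hL by simp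
  next
    case (Suc j)
    have "b (L f ^^ Suc (Suc j)) = b (L f ^^ Suc j \<circ> L f)" by (simp only: funpow_Suc_right)
    also have "... = b (L f) \<circ> b (L f ^^ Suc j)" using hcomp powB Lf by blast
    also have "... = mul_op (\<pi> f) ^^ Suc (Suc j)" using Suc hL by (simp only: funpow.simps(2))
    finally show ?case .
  qed
  define n where "n = ord \<iota>X' (L' g)"
  define X where "X = (L f ^^ (n + 1)) \<circ> mul_op (\<pi>' g)"
  define Y where "Y = R0 \<circ> L f"
  have XB: "X \<in> B" unfolding X_def using powB Bcomp gB by simp
  have YB: "Y \<in> B" unfolding Y_def using R0 Bcomp Lf by simp
  have "b X = L' g \<circ> (mul_op (\<pi> f) ^^ (n + 1))"
    unfolding X_def using hcomp powB gB hpi bpow by simp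
  also have "... = b (L f) \<circ> b R0" using R1 R0 hL n_def by simp
  also have "... = b Y" unfolding Y_def using hcomp R0 Lf by simp
  finally have bXY: "b X = b Y" .
  have nB: "(\<lambda>x. X x + - Y x) \<in> B" by (rule Badd[rule_format, OF XB Bneg[rule_format, OF YB]])
  have "b (\<lambda>x. X x + - Y x) = (\<lambda>y. b X y + b (\<lambda>x. - Y x) y)"
    by (rule hadd[rule_format, OF XB Bneg[rule_format, OF YB]])
  also have "... = (\<lambda>_. 0)" using bneg[OF YB] bXY by simp
  finally have "(\<lambda>x. X x + - Y x) = (\<lambda>_. 0)" using hzero nB by blast
  then have "\<And>x. X x + - Y x = 0" by (simp add: fun_eq_iff)
  then have "X = Y" by (simp add: fun_eq_iff add_eq_0_iff)
  then have QQ: "(L f ^^ (ord \<iota>X' (L' g) + 1)) \<circ> mul_op (\<pi>' g) = R0 \<circ> L f"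
    unfolding X_def Y_def n_def .
  show ?thesis using R0(1) KR QQ unfolding B_def by blast
qed

end
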